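(* Let $G$ be an edge-coloured multigraph, $N$ a matching in $G$ and $C$ a set of colours such that for each $c \in C$ there are at least $k$ edges of $N$ which are $c$-horns in $N$. If $k|C| > 2|N|$, then there exists a $C$-rainbow horn in $N$.
   Context: Let $V$ be the vertex set of $G$. For vertex sets $X,Y$, $E[X,Y]$ is the set of edges with one endpoint in $X$ and the other in $Y$; for an edge $e=xy$, $E[e,Y]$ means $E[\{x,y\},Y]$. A horn in a matching $N$ is an edge $e \in N$ for which there exist two vertex-disjoint edges $e_1,e_2 \in E[e, V\setminus V(N)]$. It is a $c$-horn if such $e_1,e_2$ exist that are both of colour $c$, and it is a $C$-rainbow horn if such $e_1,e_2$ exist with $e_1$ of colour $c_1$ and $e_2$ of colour $c_2$ for two distinct $c_1,c_2 \in C$. *)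

theory Defs
  imports Main
begin

text \<open>An edge-coloured multigraph: vertex set V, edge set E (edges are abstract
  objects, so parallel edges are allowed), an endpoint map ends giving each edge
  its two-element set of endpoints, and a colouring col.\<close>

definition multigraph :: "'v set \<Rightarrow> 'e set \<Rightarrow> ('e \<Rightarrow> 'v set) \<Rightarrow> bool" where
  "multigraph V E ends \<longleftrightarrow> finite V \<and> finite E \<and>
     (\<forall>e\<in>E. ends e \<subseteq> V \<and> card (ends e) = 2)"

definition matching :: "'e set \<Rightarrow> ('e \<Rightarrow> 'v set) \<Rightarrow> 'e set \<Rightarrow> bool" where
  "matching E ends N \<longleftrightarrow> N \<subseteq> E \<and>
     (\<forall>e\<in>N. \<forall>f\<in>N. e \<noteq> f \<longrightarrow> ends e \<inter> ends f = {})"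

definition vset :: "('e \<Rightarrow> 'v set) \<Rightarrow> 'e set \<Rightarrow> 'v set" where
  "vset ends N = (\<Union>e\<in>N. ends e)"

definition edges_between :: "'e set \<Rightarrow> ('e \<Rightarrow> 'v set) \<Rightarrow> 'v set \<Rightarrow> 'v set \<Rightarrow> 'e set" where
  "edges_between E ends X Y = {f\<in>E. \<exists>x\<in>X. \<exists>y\<in>Y. ends f = {x, y}}"

definition horn :: "'v set \<Rightarrow> 'e set \<Rightarrow> ('e \<Rightarrow> 'v set) \<Rightarrow> 'e set \<Rightarrow> 'e \<Rightarrow> bool" where
  "horn V E ends N e \<longleftrightarrow> e \<in> N \<and>
     (\<exists>e1\<in>edges_between E ends (ends e) (V - vset ends N).
      \<exists>e2\<in>edges_between E ends (ends e) (V - vset ends N).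
        ends e1 \<inter> ends e2 = {})"

definition c_horn :: "'v set \<Rightarrow> 'e set \<Rightarrow> ('e \<Rightarrow> 'v set) \<Rightarrow> ('e \<Rightarrow> 'c) \<Rightarrow> 'e set \<Rightarrow> 'c \<Rightarrow> 'e \<Rightarrow> bool" where
  "c_horn V E ends col N c e \<longleftrightarrow> e \<in> N \<and>
     (\<exists>e1\<in>edges_between E ends (ends e) (V - vset ends N).
      \<exists>e2\<in>edges_between E ends (ends e) (V - vset ends N).
        ends e1 \<inter> ends e2 = {} \<and> col e1 = c \<and> col e2 = c)"

definition rainbow_horn :: "'v set \<Rightarrow> 'e set \<Rightarrow> ('e \<Rightarrow> 'v set) \<Rightarrow> ('e \<Rightarrow> 'c) \<Rightarrow> 'e set \<Rightarrow> 'c set \<Rightarrow> 'e \<Rightarrow> bool" where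
  "rainbow_horn V E ends col N C e \<longleftrightarrow> e \<in> N \<and>
     (\<exists>e1\<in>edges_between E ends (ends e) (V - vset ends N).
      \<exists>e2\<in>edges_between E ends (ends e) (V - vset ends N).
        ends e1 \<inter> ends e2 = {} \<and> col e1 \<in> C \<and> col e2 \<in> C \<and> col e1 \<noteq> col e2)"

end

theory Submission
  imports Defs
begin

lemma orient:
  assumes h: "c_horn V E ends col N c e" and ee: "ends e = {x,y}" and xy: "x \<noteq> y"
    and xW: "x \<notin> V - vset ends N" and yW: "y \<notin> V - vset ends N"
  shows "\<exists>a b u v. a \<in> edges_between E ends (ends e) (V - vset ends N)
     \<and> b \<in> edges_between E ends (ends e) (V - vset ends N)
     \<and> ends a = {x,u} \<and> ends b = {y,v} \<and> u \<in> V - vset ends N \<and> v \<in> V - vset ends N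
     \<and> u \<noteq> v \<and> col a = c \<and> col b = c"
proof -
  obtain e1 e2 where e1: "e1 \<in> edges_between E ends (ends e) (V - vset ends N)"
    and e2: "e2 \<in> edges_between E ends (ends e) (V - vset ends N)"
    and d: "ends e1 \<inter> ends e2 = {}" and c1: "col e1 = c" and c2: "col e2 = c"
    using h unfolding c_horn_def by blast
  obtain z1 w1 where z1: "z1 \<in> {x,y}" "w1 \<in> V - vset ends N" "ends e1 = {z1,w1}"
    using e1 ee unfolding edges_between_def by auto
  obtain z2 w2 where z2: "z2 \<in> {x,y}" "w2 \<in> V - vset ends N" "ends e2 = {z2,w2}"
    using e2 ee unfolding edges_between_def by auto
  have "w1 \<noteq> w2" "z1 \<noteq> z2" using d z1 z2 by auto
  show ?thesis
  proof (cases "z1 = x")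
    case True
    then have "z2 = y" using z2 \<open>z1 \<noteq> z2\<close> by auto
    then show ?thesis using True e1 e2 z1 z2 c1 c2 \<open>w1 \<noteq> w2\<close> by blast
  next
    case False
    then have "z1 = y" "z2 = x" using z1 z2 \<open>z1 \<noteq> z2\<close> by auto
    then show ?thesis using e1 e2 z1 z2 c1 c2 \<open>w1 \<noteq> w2\<close> by metis
  qed
qed

lemma three:
  assumes "3 \<le> card S"
  shows "\<exists>a b c. a \<in> S \<and> b \<in> S \<and> c \<in> S \<and> a \<noteq> b \<and> a \<noteq> c \<and> b \<noteq> c"
proof -
  have "finite S" using assms by (metis card.infinite not_numeral_le_zero)
  obtain a where a: "a \<in> S" using assms by fastforce
  have "2 \<le> card (S - {a})" using assms a \<open>finite S\<close> by auto
  then have "S - {a} \<noteq> {}" by (metis card.empty not_numeral_le_zero)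
  then obtain b where b: "b \<in> S - {a}" by blast
  have "1 \<le> card (S - {a} - {b})" using \<open>2 \<le> card (S - {a})\<close> b \<open>finite S\<close> by auto
  then have "S - {a} - {b} \<noteq> {}" by (metis card.empty not_one_le_zero)
  then obtain c where c: "c \<in> S - {a} - {b}" by blast
  show ?thesis using a b c by blast
qed

theorem lemma2p2:
  fixes V :: "'v set" and E :: "'e set" and ends :: "'e \<Rightarrow> 'v set"
    and col :: "'e \<Rightarrow> 'c" and N :: "'e set" and C :: "'c set" and k :: nat
  assumes "multigraph V E ends"
    and "matching E ends N"
    and "\<forall>c\<in>C. card {e\<in>N. c_horn V E ends col N c e} \<ge> k"
    and "k * card C > 2 * card N"
  shows "\<exists>e. rainbow_horn V E ends col N C e"
proof -
  let ?P = "\<lambda>c e. c_horn V E ends col N c e"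
  have fC: "finite C" using assms(4) by (metis card.infinite mult_0_right not_less0)
  have fN: "finite N" using assms(1,2) unfolding multigraph_def matching_def
    using finite_subset by blast
  have cnt: "\<And>A Q. finite A \<Longrightarrow> card {x\<in>A. Q x} = (\<Sum>x\<in>A. if Q x then 1 else 0)"
    by (simp add: sum.inter_filter[symmetric])
  have "k * card C = (\<Sum>c\<in>C. k)" by simp
  also have "\<dots> \<le> (\<Sum>c\<in>C. card {e\<in>N. ?P c e})" using assms(3) by (intro sum_mono) auto
  also have "\<dots> = (\<Sum>c\<in>C. \<Sum>e\<in>N. if ?P c e then 1 else 0)" using cnt[OF fN] by (intro sum.cong) auto
  also have "\<dots> = (\<Sum>e\<in>N. \<Sum>c\<in>C. if ?P c e then 1 else 0)" by (rule sum.swap)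
  also have "\<dots> = (\<Sum>e\<in>N. card {c\<in>C. ?P c e})" using cnt[OF fC] by (intro sum.cong) auto
  finally have big: "2 * card N < (\<Sum>e\<in>N. card {c\<in>C. ?P c e})" using assms(4) by simp
  have "\<exists>e\<in>N. 3 \<le> card {c\<in>C. ?P c e}"
  proof (rule ccontr)
    assume "\<not> ?thesis"
    then have "(\<Sum>e\<in>N. card {c\<in>C. ?P c e}) \<le> (\<Sum>e\<in>N. 2)"
      by (intro sum_mono) auto
    then show False using big by simp
  qed
  then obtain e where eN: "e \<in> N" and e3: "3 \<le> card {c\<in>C. ?P c e}" by blast
  obtain c1 c2 c3 where cs: "c1 \<in> C" "c2 \<in> C" "c3 \<in> C" "?P c1 e" "?P c2 e" "?P c3 e"
    "c1 \<noteq> c2" "c1 \<noteq> c3" "c2 \<noteq> c3"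
    using three[OF e3] by blast
  have "e \<in> E" "card (ends e) = 2" using eN assms(1,2) unfolding multigraph_def matching_def by auto
  then obtain x y where ee: "ends e = {x,y}" and xy: "x \<noteq> y" by (meson card_2_iff)
  have xW: "x \<notin> V - vset ends N" and yW: "y \<notin> V - vset ends N"
    using eN ee unfolding vset_def by auto
  let ?W = "V - vset ends N"
  let ?B = "edges_between E ends (ends e) ?W"
  obtain a1 b1 u1 v1 where w1: "a1 \<in> ?B" "b1 \<in> ?B" "ends a1 = {x,u1}" "ends b1 = {y,v1}"
     "u1 \<in> ?W" "v1 \<in> ?W" "u1 \<noteq> v1" "col a1 = c1" "col b1 = c1"
    using orient[OF cs(4) ee xy xW yW] by blast
  obtain a2 b2 u2 v2 where w2: "a2 \<in> ?B" "b2 \<in> ?B" "ends a2 = {x,u2}" "ends b2 = {y,v2}"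
     "u2 \<in> ?W" "v2 \<in> ?W" "u2 \<noteq> v2" "col a2 = c2" "col b2 = c2"
    using orient[OF cs(5) ee xy xW yW] by blast
  obtain a3 b3 u3 v3 where w3: "a3 \<in> ?B" "b3 \<in> ?B" "ends a3 = {x,u3}" "ends b3 = {y,v3}"
     "u3 \<in> ?W" "v3 \<in> ?W" "u3 \<noteq> v3" "col a3 = c3" "col b3 = c3"
    using orient[OF cs(6) ee xy xW yW] by blast
  have disj: "\<And>u v. u \<in> ?W \<Longrightarrow> v \<in> ?W \<Longrightarrow> u \<noteq> v \<Longrightarrow> {x,u} \<inter> {y,v} = {}"
    using xy xW yW by auto
  have "(u1 \<noteq> v2) \<or> (u2 \<noteq> v1) \<or> (u1 \<noteq> v3) \<or> (u3 \<noteq> v1) \<or> (u2 \<noteq> v3) \<or> (u3 \<noteq> v2)"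
    using w1(7) by auto
  then show ?thesis
    unfolding rainbow_horn_def using eN w1 w2 w3 cs disj by metis
qed

end
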